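(* Let $\delta_j,\delta_k$ be coprime integers with $1<\delta_j<\delta_k$, let $r=\delta_k \bmod \delta_j$, and let $f\colon \mathcal B(\delta_j,r)\to\mathcal B(\delta_k,\delta_j)$ be given by $f(x',y')=(y',\,x'-y'\lfloor \delta_k/\delta_j\rfloor)$. Then $f$ is well defined (maps into $\mathcal B(\delta_k,\delta_j)$), injective, and additive: whenever $\mathbf a,\mathbf b,\mathbf a+\mathbf b\in\mathcal B(\delta_j,r)$, one has $f(\mathbf a+\mathbf b)=f(\mathbf a)+f(\mathbf b)$.
   Context: For coprime positive integers $p,q$ and $i\in\{1,\ldots,\max\{p,q\}\}$, the $\lambda$-B\'ezout couple of $i$ for $(p,q)$ is the unique $(x,y)\in\mathbb Z^2$ with $xp+yq=i$ and $0<y\le p$, and the $\mu$-B\'ezout couple of $i$ for $(p,q)$ is the unique $(x,y)\in\mathbb Z^2$ with $xp+yq=i$ and $0<x\le q$. $\mathcal B(p,q)$ denotes the set of all $\lambda$- and $\mu$-B\'ezout couples for $(p,q)$ (for all such $i$); an element of $\mathcal B(p,q)$ is called a B\'ezout couple for $(p,q)$. Note that $1\le r<\delta_j$ since $\gcd(\delta_j,\delta_k)=1$ and $\delta_j>1$. *)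

theory Defs
  imports Main "HOL-Library.Product_Plus"
begin

definition lambda_couple :: "int \<Rightarrow> int \<Rightarrow> int \<Rightarrow> int \<times> int" where
  "lambda_couple p q i = (THE c. fst c * p + snd c * q = i \<and> 0 < snd c \<and> snd c \<le> p)"

definition mu_couple :: "int \<Rightarrow> int \<Rightarrow> int \<Rightarrow> int \<times> int" where
  "mu_couple p q i = (THE c. fst c * p + snd c * q = i \<and> 0 < fst c \<and> fst c \<le> q)"

definition bezout_couples :: "int \<Rightarrow> int \<Rightarrow> (int \<times> int) set" where
  "bezout_couples p q =
     (lambda_couple p q ` {1..max p q}) \<union> (mu_couple p q ` {1..max p q})"

definition prop35_map :: "int \<Rightarrow> int \<Rightarrow> int \<times> int \<Rightarrow> int \<times> int" where
  "prop35_map dj dk c = (snd c, fst c - snd c * (dk div dj))"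

end

theory Submission
  imports Defs
begin

lemma lam_exists:
  fixes p q i :: int
  assumes "coprime p q" "0 < p"
  shows "\<exists>c. fst c * p + snd c * q = i \<and> 0 < snd c \<and> snd c \<le> p"
proof -
  obtain s t where st: "s * p + t * q = 1"
    using bezout_int[of p q] assms by (auto simp: coprime_iff_gcd_eq_1)
  define d where "d = (t*i - 1) div p"
  define y where "y = (t*i - 1) mod p + 1"
  have yd: "y = t*i - p*d" unfolding y_def d_def
    using div_mult_mod_eq[of "t*i - 1" p] by (simp add: algebra_simps)
  have "0 < y" "y \<le> p" unfolding y_def using assms
    by (auto simp: pos_mod_sign pos_mod_bound add1_zle_eq)
  moreover have "(s*i + q*d) * p + y * q = i"
  proof -
    have "(s*i + q*d) * p + y * q = i * (s * p + t * q)" unfolding yd by (simp add: algebra_simps)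
    thus ?thesis using st by simp
  qed
  ultimately show ?thesis by (intro exI[of _ "(s*i + q*d, y)"]) auto
qed

lemma mu_exists:
  fixes p q i :: int
  assumes "coprime p q" "0 < q"
  shows "\<exists>c. fst c * p + snd c * q = i \<and> 0 < fst c \<and> fst c \<le> q"
proof -
  obtain c where "fst c * q + snd c * p = i \<and> 0 < snd c \<and> snd c \<le> q"
    using lam_exists[of q p i] assms by (auto simp: coprime_commute)
  thus ?thesis by (intro exI[of _ "(snd c, fst c)"]) (auto simp: algebra_simps)
qed

lemma lam_uniq:
  fixes p q :: int
  assumes "coprime p q" "0 < p"
    and "x1 * p + y1 * q = x2 * p + y2 * q" "0 < y1" "y1 \<le> p" "0 < y2" "y2 \<le> p"
  shows "x1 = x2 \<and> y1 = y2"
proof -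
  have e: "(y1 - y2) * q = p * (x2 - x1)" using assms(3) by (simp add: algebra_simps)
  have "p dvd (y1 - y2) * q" unfolding e by simp
  hence d: "p dvd (y1 - y2)" using assms(1) by (simp add: coprime_dvd_mult_left_iff)
  have "y1 = y2"
  proof (rule ccontr)
    assume "y1 \<noteq> y2"
    hence "\<bar>p\<bar> \<le> \<bar>y1 - y2\<bar>" using dvd_imp_le_int[OF _ d] by simp
    thus False using assms(2,4-7) by linarith
  qed
  moreover from this have "x1 * p = x2 * p" using assms(3) by simp
  ultimately show ?thesis using assms(2) by simp
qed

lemma lam_char:
  fixes p q :: int
  assumes "coprime p q" "0 < p"
  shows "lambda_couple p q i = (THE c. fst c * p + snd c * q = i \<and> 0 < snd c \<and> snd c \<le> p)"
    and "fst (lambda_couple p q i) * p + snd (lambda_couple p q i) * q = i \<and>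
         0 < snd (lambda_couple p q i) \<and> snd (lambda_couple p q i) \<le> p"
proof -
  show "lambda_couple p q i = (THE c. fst c * p + snd c * q = i \<and> 0 < snd c \<and> snd c \<le> p)"
    by (simp add: lambda_couple_def)
  obtain c where c: "fst c * p + snd c * q = i \<and> 0 < snd c \<and> snd c \<le> p"
    using lam_exists[OF assms] by blast
  have "\<exists>!c. fst c * p + snd c * q = i \<and> 0 < snd c \<and> snd c \<le> p"
  proof (rule ex1I[of _ c])
    show "fst c * p + snd c * q = i \<and> 0 < snd c \<and> snd c \<le> p" by fact
    fix c' assume "fst c' * p + snd c' * q = i \<and> 0 < snd c' \<and> snd c' \<le> p"
    thus "c' = c" using lam_uniq[OF assms, of "fst c'" "snd c'" "fst c" "snd c"] c
      by (simp add: prod_eq_iff)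
  qed
  from theI'[OF this] show "fst (lambda_couple p q i) * p + snd (lambda_couple p q i) * q = i \<and>
         0 < snd (lambda_couple p q i) \<and> snd (lambda_couple p q i) \<le> p"
    by (simp add: lambda_couple_def)
qed

lemma lam_eq:
  fixes p q :: int
  assumes "coprime p q" "0 < p" "fst c * p + snd c * q = i" "0 < snd c" "snd c \<le> p"
  shows "lambda_couple p q i = c"
  using lam_char(2)[OF assms(1,2), of i] assms
    lam_uniq[OF assms(1,2), of "fst (lambda_couple p q i)" "snd (lambda_couple p q i)" "fst c" "snd c"]
  by (simp add: prod_eq_iff)

lemma mu_char:
  fixes p q :: int
  assumes "coprime p q" "0 < q"
  shows "fst (mu_couple p q i) * p + snd (mu_couple p q i) * q = i \<and>
         0 < fst (mu_couple p q i) \<and> fst (mu_couple p q i) \<le> q"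
proof -
  have cq: "coprime q p" using assms(1) by (simp add: coprime_commute)
  obtain c where c: "fst c * p + snd c * q = i \<and> 0 < fst c \<and> fst c \<le> q"
    using mu_exists[OF assms] by blast
  have "\<exists>!c. fst c * p + snd c * q = i \<and> 0 < fst c \<and> fst c \<le> q"
  proof (rule ex1I[of _ c])
    show "fst c * p + snd c * q = i \<and> 0 < fst c \<and> fst c \<le> q" by fact
    fix c' assume "fst c' * p + snd c' * q = i \<and> 0 < fst c' \<and> fst c' \<le> q"
    thus "c' = c" using lam_uniq[OF cq assms(2), of "snd c'" "fst c'" "snd c" "fst c"] c
      by (simp add: prod_eq_iff algebra_simps)
  qed
  from theI'[OF this] show ?thesis
    by (simp add: mu_couple_def)
qed

lemma mu_eq:
  fixes p q :: int
  assumes "coprime p q" "0 < q" "fst c * p + snd c * q = i" "0 < fst c" "fst c \<le> q"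
  shows "mu_couple p q i = c"
proof -
  have cq: "coprime q p" using assms(1) by (simp add: coprime_commute)
  show ?thesis
  using mu_char[OF assms(1,2), of i] assms
    lam_uniq[OF cq assms(2), of "snd (mu_couple p q i)" "fst (mu_couple p q i)" "snd c" "fst c"]
  by (simp add: prod_eq_iff algebra_simps)
qed

theorem proposition3p5:
  fixes dj dk :: int
  assumes "coprime dj dk" and "1 < dj" and "dj < dk"
  defines "r \<equiv> dk mod dj"
  shows "prop35_map dj dk ` bezout_couples dj r \<subseteq> bezout_couples dk dj \<and>
         inj_on (prop35_map dj dk) (bezout_couples dj r) \<and>
         (\<forall>a b. a \<in> bezout_couples dj r \<longrightarrow> b \<in> bezout_couples dj r \<longrightarrow>
           a + b \<in> bezout_couples dj r \<longrightarrow>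
           prop35_map dj dk (a + b) = prop35_map dj dk a + prop35_map dj dk b)"
proof (intro conjI)
  define q where "q = dk div dj"
  have dk: "dk = q * dj + r" unfolding q_def r_def by simp
  have c1: "coprime dj r" unfolding r_def using assms(1,2) by simp
  have c2: "coprime dk dj" using assms(1) by (simp add: coprime_commute)
  have r0: "0 \<le> r" "r < dj" unfolding r_def using assms(2) by auto
  have rne: "r \<noteq> 0"
  proof
    assume "r = 0"
    hence "dj dvd dk" unfolding r_def by auto
    hence "is_unit dj" using assms(1) by (meson coprime_common_divisor dvd_refl)
    thus False using assms(2) by simp
  qed
  hence rp: "0 < r" using r0 by simp
  have q1: "1 \<le> q" unfolding q_def using assms(2,3)
    using zdiv_mono1[of dj dk dj] by simp
  have mx: "max dj r = dj" "max dk dj = dk" using r0 assms by auto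
  show "prop35_map dj dk ` bezout_couples dj r \<subseteq> bezout_couples dk dj"
  proof
    fix z assume "z \<in> prop35_map dj dk ` bezout_couples dj r"
    then obtain c where c: "c \<in> bezout_couples dj r" and z: "z = prop35_map dj dk c" by auto
    have zf: "z = (snd c, fst c - snd c * q)" using z by (simp add: prop35_map_def q_def)
    from c obtain i where i: "1 \<le> i" "i \<le> dj" and
      cc: "c = lambda_couple dj r i \<or> c = mu_couple dj r i"
      unfolding bezout_couples_def mx by auto
    have eqi: "fst z * dk + snd z * dj = fst c * dj + snd c * r"
      unfolding zf dk by (simp add: algebra_simps)
    show "z \<in> bezout_couples dk dj"
    proof (cases "c = lambda_couple dj r i")
      case True
      with lam_char(2)[OF c1, of i] assms(2)
      have h: "fst c * dj + snd c * r = i" "0 < snd c" "snd c \<le> dj" by auto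
      have "mu_couple dk dj i = z"
        by (rule mu_eq[OF c2]) (use h eqi zf assms in auto)
      moreover have "i \<in> {1..max dk dj}" using i mx assms by auto
      ultimately show ?thesis unfolding bezout_couples_def by blast
    next
      case False
      with cc have "c = mu_couple dj r i" by simp
      with mu_char[OF c1 rp, of i]
      have h: "fst c * dj + snd c * r = i" "0 < fst c" "fst c \<le> r" by auto
      have yn: "snd c \<le> 0"
      proof (rule ccontr)
        assume "\<not> snd c \<le> 0"
        hence "snd c * r > 0" using rp by simp
        hence "snd c * r \<ge> 1" by linarith
        moreover have "fst c * dj \<ge> dj" using h(2) assms(2) by simp
        ultimately show False using h(1) i by simp
      qed
      have ylow: "- snd c \<le> dj - 1"
      proof -
        have "(- snd c) * r = fst c * dj - i" using h(1) by (simp add: algebra_simps)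
        also have "\<dots> \<le> r * dj - 1" using h(3) i assms(2)
        proof -
          have "fst c * dj \<le> r * dj" using h(3) assms(2) by simp
          thus ?thesis using i by linarith
        qed
        finally have "(- snd c) * r < dj * r" by (simp add: algebra_simps)
        hence "- snd c < dj" using rp by (meson mult_right_less_imp_less less_imp_le)
        thus ?thesis by linarith
      qed
      have "snd c * q \<le> 0" using yn q1 by (simp add: mult_nonpos_nonneg)
      hence Y0: "0 < fst c - snd c * q" using h(2) by linarith
      have m1: "(- snd c) * dk \<le> (dj - 1) * dk"
        by (rule mult_right_mono[OF ylow]) (use assms in linarith)
      have "(fst c - snd c * q) * dj = i + (- snd c) * dk" using eqi zf h(1)
        by (simp add: algebra_simps)
      also have "\<dots> \<le> dj + (dj - 1) * dk" using i m1 by linarith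
      also have "\<dots> \<le> dk * dj" using assms by (simp add: algebra_simps)
      finally have "(fst c - snd c * q) * dj \<le> dk * dj" .
      hence "fst c - snd c * q \<le> dk" using assms(2) by simp
      have "lambda_couple dk dj i = z"
      proof (rule lam_eq[OF c2])
        show "fst z * dk + snd z * dj = i" using eqi h(1) by simp
        show "0 < snd z" using Y0 zf by simp
        show "0 < dk" using assms by simp
        show "snd z \<le> dk" using \<open>fst c - snd c * q \<le> dk\<close> zf by simp
      qed
      moreover have "i \<in> {1..max dk dj}" using i mx assms by auto
      ultimately show ?thesis unfolding bezout_couples_def by blast
    qed
  qed
  show "inj_on (prop35_map dj dk) (bezout_couples dj r)"
  proof (rule inj_onI)
    fix a b :: "int \<times> int"
    assume "prop35_map dj dk a = prop35_map dj dk b"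
    hence P: "(snd a, fst a - snd a * (dk div dj)) = (snd b, fst b - snd b * (dk div dj))"
      unfolding prop35_map_def .
    have e12: "snd a = snd b \<and> fst a - snd a * (dk div dj) = fst b - snd b * (dk div dj)"
      using P by (rule Pair_inject) (rule conjI; assumption)
    hence e1: "snd a = snd b" by (rule conjunct1)
    from e12 have e2: "fst a - snd a * (dk div dj) = fst b - snd b * (dk div dj)" by (rule conjunct2)
    have e3: "snd a * (dk div dj) = snd b * (dk div dj)" using e1 by (rule arg_cong)
    have "fst a = fst b" using e2 e3 by linarith
    thus "a = b" using e1 by (simp add: prod_eq_iff)
  qed
  show "\<forall>a b. a \<in> bezout_couples dj r \<longrightarrow> b \<in> bezout_couples dj r \<longrightarrow>
           a + b \<in> bezout_couples dj r \<longrightarrow>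
           prop35_map dj dk (a + b) = prop35_map dj dk a + prop35_map dj dk b"
  proof (intro allI impI)
    fix a b :: "int \<times> int"
    show "prop35_map dj dk (a + b) = prop35_map dj dk a + prop35_map dj dk b"
      unfolding prop35_map_def prod_eq_iff by (simp add: algebra_simps)
  qed
qed

end
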